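(* Let $V$ be a real Hilbert space, $V_{\mathcal T}\subset V$ a finite-dimensional subspace, and let $a,a_\delta:V\times V\to\mathbb R$, $a_{\mathcal T}:V_{\mathcal T}\times V_{\mathcal T}\to\mathbb R$, $f\in V^*$, $f_{\mathcal T}$ a linear functional on $V_{\mathcal T}$, and $j:V\to\mathbb R$ be as described in the context. Let $u,z\in V$ satisfy $$a(u;v)+a_\delta(u;v)=\langle f,v\rangle\quad\forall v\in V,$$ $$a'(u;w,z)+a_\delta'(u;w,z)=j'(u;w)\quad\forall w\in V.$$ Let $u_{\mathcal T m},z_{\mathcal T m}\in V_{\mathcal T}$ satisfy $$a_{\mathcal T}(u_{\mathcal T m};v)=\langle f_{\mathcal T},v\rangle\quad\forall v\in V_{\mathcal T},$$ $$a'(u_{\mathcal T m};w,z_{\mathcal T m})=j'(u_{\mathcal T m};w)\quad\forall w\in V_{\mathcal T}.$$ Let $i_{\mathcal T}:V\to V_{\mathcal T}$ be any map (an interpolation operator). Put $$e=(e_u,e_z):=(u-u_{\mathcal T m},\,z-z_{\mathcal T m}),\qquad x:=(u,z),\qquad x_{\mathcal T m}:=(u_{\mathcal T m},z_{\mathcal T m}).$$ Assume the differentiability hypotheses stated in the context. Then $$\begin{aligned} j(u)-j(u_{\mathcal T m}) ={}& -a_\delta(u_{\mathcal T m};z_{\mathcal T m})\\ &+\langle f,z_{\mathcal T m}\rangle-\langle f_{\mathcal T},z_{\mathcal T m}\rangle-a(u_{\mathcal T m};z_{\mathcal T m})+a_{\mathcal T}(u_{\mathcal T m};z_{\mathcal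 T m})\\ &+\tfrac12\big[\varrho(u_{\mathcal T m};z-i_{\mathcal T}z)+\varrho^*(u_{\mathcal T m};z_{\mathcal T m},u-i_{\mathcal T}u)\big]\\ &-\tfrac12\big[a_\delta(u_{\mathcal T m};e_z)+a_\delta'(u_{\mathcal T m};e_u,z_{\mathcal T m})\big]\\ &-\tfrac12\varrho(u_{\mathcal T m};z_{\mathcal T m}-i_{\mathcal T}z)-\tfrac12 R, \end{aligned}$$ where $$R:=\int_0^1\sigma(1-\sigma)\,L'''(x_{\mathcal T m}+\sigma e;e,e,e)\,d\sigma .$$
   Context: Setting and data: - $V$ is a real Hilbert space, $V_{\mathcal T}\subset V$ is a finite-dimensional subspace, and $X:=V\times V$. - $a,a_\delta:V\times V\to\mathbb R$ are linear in the second argument and possibly nonlinear in the first. The value $a(w;v)$ denotes $a$ evaluated at $(w,v)$, and similarly for $a_\delta$. - $f\in V^*$, with $\langle f,v\rangle$ its value at $v$. - $j:V\to\mathbb R$ is an output functional. - $a_{\mathcal T}:V_{\mathcal T}\times V_{\mathcal T}\to\mathbb R$ is linear in the second argument. It need not equal the restriction of $a$. - $f_{\mathcal T}$ is a linear functional on $V_{\mathcal T}$. It need not equal the restriction of $f$. Derivatives: - $a'(u;w,v):=\lim_{\epsilon\to0}\epsilon^{-1}[a(u+\epsilon w;v)-a(u;v)]$ denotes the Gâteaux (directional) derivative in the first argument. It is assumed to exist and be linear in $w$ and $v$. - $a_\delta'$ and $j'(u;w)$ are defined analogously and satisfy the same assumptions. The functional $L$: on $X$ define $$L(x):=j(u)+\langle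 f,z\rangle-a(u;z)-a_\delta(u;z),\qquad x=(u,z).$$ Its directional derivative at $x$ in direction $y=(w,v)\in X$ is $$L'(x;y)=j'(u;w)-a'(u;w,z)-a_\delta'(u;w,z)+\langle f,v\rangle-a(u;v)-a_\delta(u;v).$$ Residuals: for $v,w\in V$, $$\varrho(u_{\mathcal T m};v):=\langle f,v\rangle-a(u_{\mathcal T m};v),$$ $$\varrho^*(u_{\mathcal T m};z_{\mathcal T m},w):=j'(u_{\mathcal T m};w)-a'(u_{\mathcal T m};w,z_{\mathcal T m}).$$ Differentiability hypothesis: the function $\varphi(\sigma):=L(x_{\mathcal T m}+\sigma e)$ is three times continuously differentiable on $[0,1]$, with $\varphi'(\sigma)=L'(x_{\mathcal T m}+\sigma e;e)$. We write $L'''(x_{\mathcal T m}+\sigma e;e,e,e):=\varphi'''(\sigma)$. *)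

theory Defs
  imports "HOL-Analysis.Analysis"
begin

definition is_gateaux_form ::
  "('v::real_normed_vector \<Rightarrow> 'v \<Rightarrow> real) \<Rightarrow> ('v \<Rightarrow> 'v \<Rightarrow> 'v \<Rightarrow> real) \<Rightarrow> bool" where
  "is_gateaux_form a ap \<longleftrightarrow>
     (\<forall>u w v. ((\<lambda>\<epsilon>. (a (u + \<epsilon> *\<^sub>R w) v - a u v) / \<epsilon>) \<longlongrightarrow> ap u w v) (at 0))"

definition is_gateaux_fun ::
  "('v::real_normed_vector \<Rightarrow> real) \<Rightarrow> ('v \<Rightarrow> 'v \<Rightarrow> real) \<Rightarrow> bool" where
  "is_gateaux_fun j jp \<longleftrightarrow>
     (\<forall>u w. ((\<lambda>\<epsilon>. (j (u + \<epsilon> *\<^sub>R w) - j u) / \<epsilon>) \<longlongrightarrow> jp u w) (at 0))"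

text \<open>Linearity on a subspace (for forms defined only on V_T).\<close>
definition linear_on_sub :: "'v::real_vector set \<Rightarrow> ('v \<Rightarrow> real) \<Rightarrow> bool" where
  "linear_on_sub S g \<longleftrightarrow>
     (\<forall>x\<in>S. \<forall>y\<in>S. g (x + y) = g x + g y) \<and> (\<forall>c. \<forall>x\<in>S. g (c *\<^sub>R x) = c * g x)"

definition Lfun ::
  "('v \<Rightarrow> real) \<Rightarrow> ('v \<Rightarrow> real) \<Rightarrow> ('v \<Rightarrow> 'v \<Rightarrow> real) \<Rightarrow> ('v \<Rightarrow> 'v \<Rightarrow> real)
    \<Rightarrow> 'v \<times> 'v \<Rightarrow> real" where
  "Lfun j f a ad x = j (fst x) + f (snd x) - a (fst x) (snd x) - ad (fst x) (snd x)"

definition Lder ::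
  "('v \<Rightarrow> 'v \<Rightarrow> real) \<Rightarrow> ('v \<Rightarrow> real) \<Rightarrow> ('v \<Rightarrow> 'v \<Rightarrow> real) \<Rightarrow> ('v \<Rightarrow> 'v \<Rightarrow> 'v \<Rightarrow> real)
    \<Rightarrow> ('v \<Rightarrow> 'v \<Rightarrow> real) \<Rightarrow> ('v \<Rightarrow> 'v \<Rightarrow> 'v \<Rightarrow> real) \<Rightarrow> 'v \<times> 'v \<Rightarrow> 'v \<times> 'v \<Rightarrow> real" where
  "Lder jp f a ap ad adp x y =
     jp (fst x) (fst y) - ap (fst x) (fst y) (snd x) - adp (fst x) (fst y) (snd x)
     + f (snd y) - a (fst x) (snd y) - ad (fst x) (snd y)"

definition rho :: "('v \<Rightarrow> real) \<Rightarrow> ('v \<Rightarrow> 'v \<Rightarrow> real) \<Rightarrow> 'v \<Rightarrow> 'v \<Rightarrow> real" where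
  "rho f a uh v = f v - a uh v"

definition rho_star :: "('v \<Rightarrow> 'v \<Rightarrow> real) \<Rightarrow> ('v \<Rightarrow> 'v \<Rightarrow> 'v \<Rightarrow> real) \<Rightarrow> 'v \<Rightarrow> 'v \<Rightarrow> 'v \<Rightarrow> real" where
  "rho_star jp ap uh zh w = jp uh w - ap uh w zh"

end

theory Submission
  imports Defs
begin

theorem mainTheorem1:
  fixes VT :: "'v::{real_inner, complete_space} set"
    and a ad :: "'v \<Rightarrow> 'v \<Rightarrow> real"
    and ap adp :: "'v \<Rightarrow> 'v \<Rightarrow> 'v \<Rightarrow> real"
    and aT :: "'v \<Rightarrow> 'v \<Rightarrow> real"
    and f fT :: "'v \<Rightarrow> real"
    and j :: "'v \<Rightarrow> real"
    and jp :: "'v \<Rightarrow> 'v \<Rightarrow> real"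
    and u z uTm zTm :: 'v
    and iT :: "'v \<Rightarrow> 'v"
    and phi2 phi3 :: "real \<Rightarrow> real"
  assumes VT_sub: "subspace VT"
    and VT_fin: "\<exists>B. finite B \<and> VT = span B"
    and a_lin: "\<And>w. linear (a w)"
    and ad_lin: "\<And>w. linear (ad w)"
    and aT_lin: "\<And>w. w \<in> VT \<Longrightarrow> linear_on_sub VT (aT w)"
    and f_dual: "bounded_linear f"
    and fT_lin: "linear_on_sub VT fT"
    and ap_deriv: "is_gateaux_form a ap"
    and ap_lin1: "\<And>u v. linear (\<lambda>w. ap u w v)"
    and ap_lin2: "\<And>u w. linear (\<lambda>v. ap u w v)"
    and adp_deriv: "is_gateaux_form ad adp"
    and adp_lin1: "\<And>u v. linear (\<lambda>w. adp u w v)"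
    and adp_lin2: "\<And>u w. linear (\<lambda>v. adp u w v)"
    and jp_deriv: "is_gateaux_fun j jp"
    and jp_lin: "\<And>u. linear (jp u)"
    and primal: "\<And>v. a u v + ad u v = f v"
    and dual: "\<And>w. ap u w z + adp u w z = jp u w"
    and uTm_in: "uTm \<in> VT" and zTm_in: "zTm \<in> VT"
    and primal_h: "\<And>v. v \<in> VT \<Longrightarrow> aT uTm v = fT v"
    and dual_h: "\<And>w. w \<in> VT \<Longrightarrow> ap uTm w zTm = jp uTm w"
    and iT_into: "\<And>v. iT v \<in> VT"
    and phi_d1: "\<And>\<sigma>. \<sigma> \<in> {0..1} \<Longrightarrow>
       ((\<lambda>s. Lfun j f a ad ((uTm, zTm) + s *\<^sub>R (u - uTm, z - zTm)))
          has_real_derivative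
        Lder jp f a ap ad adp ((uTm, zTm) + \<sigma> *\<^sub>R (u - uTm, z - zTm)) (u - uTm, z - zTm))
       (at \<sigma> within {0..1})"
    and phi_d2: "\<And>\<sigma>. \<sigma> \<in> {0..1} \<Longrightarrow>
       ((\<lambda>s. Lder jp f a ap ad adp ((uTm, zTm) + s *\<^sub>R (u - uTm, z - zTm)) (u - uTm, z - zTm))
          has_real_derivative phi2 \<sigma>) (at \<sigma> within {0..1})"
    and phi_d3: "\<And>\<sigma>. \<sigma> \<in> {0..1} \<Longrightarrow> (phi2 has_real_derivative phi3 \<sigma>) (at \<sigma> within {0..1})"
    and phi3_cont: "continuous_on {0..1} phi3"
  shows "j u - j uTm =
      - ad uTm zTm
      + f zTm - fT zTm - a uTm zTm + aT uTm zTm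
      + (1/2) * (rho f a uTm (z - iT z) + rho_star jp ap uTm zTm (u - iT u))
      - (1/2) * (ad uTm (z - zTm) + adp uTm (u - uTm) zTm)
      - (1/2) * rho f a uTm (zTm - iT z)
      - (1/2) * integral {0..1} (\<lambda>\<sigma>. \<sigma> * (1 - \<sigma>) * phi3 \<sigma>)"
proof -
  define e where "e = (u - uTm, z - zTm)"
  define P where "P = (\<lambda>s::real. (uTm, zTm) + s *\<^sub>R e)"
  define phi where "phi = (\<lambda>s. Lfun j f a ad (P s))"
  define d where "d = (\<lambda>s. Lder jp f a ap ad adp (P s) e)"
  define K where "K = (\<lambda>s. -2 * phi s + (2 * s - 1) * d s + s * (1 - s) * phi2 s)"
  have D1: "\<And>s. s \<in> {0..1} \<Longrightarrow> (phi has_real_derivative d s) (at s within {0..1})"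
    using phi_d1 unfolding phi_def d_def P_def e_def by blast
  have D2: "\<And>s. s \<in> {0..1} \<Longrightarrow> (d has_real_derivative phi2 s) (at s within {0..1})"
    using phi_d2 unfolding d_def P_def e_def by blast
  have KD: "(K has_vector_derivative (s * (1 - s) * phi3 s)) (at s within {0..1})"
    if "s \<in> {0..1}" for s
  proof -
    have "(K has_real_derivative
       (-2 * d s + (2 * d s + (2 * s - 1) * phi2 s) + ((1 - 2 * s) * phi2 s + s * (1 - s) * phi3 s)))
       (at s within {0..1})"
    proof -
      have a1: "((\<lambda>s. -2 * phi s) has_real_derivative -2 * d s) (at s within {0..1})"
        using DERIV_cmult[OF D1[OF that], of "-2"] by simp
      have a2: "((\<lambda>s. (2 * s - 1) * d s) has_real_derivative (2 * d s + (2 * s - 1) * phi2 s)) (at s within {0..1})"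
      proof -
        have "((\<lambda>s. 2 * s - 1) has_real_derivative 2) (at s within {0..1})"
          by (auto intro!: derivative_eq_intros)
        from DERIV_mult[OF this D2[OF that]] show ?thesis by (simp add: algebra_simps)
      qed
      have a3: "((\<lambda>s. s * (1 - s) * phi2 s) has_real_derivative ((1 - 2 * s) * phi2 s + s * (1 - s) * phi3 s)) (at s within {0..1})"
      proof -
        have "((\<lambda>s. s * (1 - s)) has_real_derivative (1 - 2 * s)) (at s within {0..1})"
          by (auto intro!: derivative_eq_intros simp: algebra_simps)
        from DERIV_mult[OF this phi_d3[OF that]] show ?thesis by (simp add: algebra_simps)
      qed
      show ?thesis unfolding K_def using DERIV_add[OF DERIV_add[OF a1 a2] a3] by simp
    qed
    moreover have "-2 * d s + (2 * d s + (2 * s - 1) * phi2 s) + ((1 - 2 * s) * phi2 s + s * (1 - s) * phi3 s)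
       = s * (1 - s) * phi3 s" by (simp add: algebra_simps)
    ultimately have "(K has_real_derivative s * (1 - s) * phi3 s) (at s within {0..1})" by metis
    thus ?thesis by (simp add: has_real_derivative_iff_has_vector_derivative)
  qed
  have "((\<lambda>s. s * (1 - s) * phi3 s) has_integral K 1 - K 0) {0..1}"
    by (rule fundamental_theorem_of_calculus) (use KD in auto)
  hence I: "integral {0..1} (\<lambda>\<sigma>. \<sigma> * (1 - \<sigma>) * phi3 \<sigma>) = K 1 - K 0"
    by (rule integral_unique)
  have P0: "P 0 = (uTm, zTm)" and P1: "P 1 = (u, z)" by (auto simp: P_def e_def)
  have lf: "linear f" using f_dual bounded_linear.linear by blast
  have phi1: "phi 1 = j u" using primal[of z] by (simp add: phi_def P1 Lfun_def)
  have phi0: "phi 0 = j uTm + f zTm - a uTm zTm - ad uTm zTm" by (simp add: phi_def P0 Lfun_def)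
  have d1: "d 1 = 0" using primal[of "z - zTm"] dual[of "u - uTm"]
    by (simp add: d_def P1 Lder_def e_def)
  have d0: "d 0 = jp uTm (u - uTm) - ap uTm (u - uTm) zTm - adp uTm (u - uTm) zTm
      + f (z - zTm) - a uTm (z - zTm) - ad uTm (z - zTm)"
    by (simp add: d_def P0 Lder_def e_def)
  have inVT: "iT u - uTm \<in> VT" using VT_sub iT_into uTm_in by (simp add: subspace_diff)
  have su: "u - uTm = (u - iT u) + (iT u - uTm)" by simp
  have A: "jp uTm (u - uTm) - ap uTm (u - uTm) zTm = jp uTm (u - iT u) - ap uTm (u - iT u) zTm"
  proof -
    have "jp uTm (u - uTm) = jp uTm (u - iT u) + jp uTm (iT u - uTm)"
      by (subst su, rule linear_add[OF jp_lin])
    moreover have "ap uTm (u - uTm) zTm = ap uTm (u - iT u) zTm + ap uTm (iT u - uTm) zTm"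
      by (subst su, rule linear_add[OF ap_lin1[of uTm zTm], simplified])
    ultimately show ?thesis using dual_h[OF inVT] by simp
  qed
  have sz: "z - zTm = (z - iT z) - (zTm - iT z)" by simp
  have B: "f (z - zTm) - a uTm (z - zTm) = (f (z - iT z) - a uTm (z - iT z)) - (f (zTm - iT z) - a uTm (zTm - iT z))"
  proof -
    have "f (z - zTm) = f (z - iT z) - f (zTm - iT z)" by (subst sz, rule linear_diff[OF lf])
    moreover have "a uTm (z - zTm) = a uTm (z - iT z) - a uTm (zTm - iT z)"
      by (subst sz, rule linear_diff[OF a_lin])
    ultimately show ?thesis by simp
  qed
  have C: "aT uTm zTm = fT zTm" using primal_h[OF zTm_in] .
  show ?thesis
    unfolding I K_def rho_def rho_star_def
    using phi1 phi0 d1 d0 A B C by (simp add: algebra_simps)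
qed

end
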